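(* Let $X\le\mathrm{GL}_m(q)$, let $Y\le\mathrm{Sym}(k)$ be a group of $k\times k$ permutation matrices, and let $H\le X\wr Y\le\mathrm{GL}_{mk}(q)$. Let $A(k)=(y_{ij})$ be the $k\times k$ upper-triangular matrix with $y_{ij}=(-1)^{j-i}$ for $j\ge i$ and $y_{ij}=0$ for $j<i$, and let $x_1,\dots,x_k\in X$ be arbitrary. Define $x\in\mathrm{GL}_{mk}(q)$ as the block matrix whose $(i,j)$ block ($m\times m$) is $y_{ij}x_i$. Let $h=\mathrm{diag}[D_1,\dots,D_k]\cdot s\in H$ with $D_i\in X$ and $s\in Y$. If $h^x\in H$, then $s$ is the identity and $D_j^{x_j}=D_{j+1}^{x_{j+1}}$ for $j=1,\dots,k-1$.
   Context: $X\wr Y$ is the matrix group obtained by replacing the entries $1$ of matrices in $Y$ by arbitrary matrices of $X$ and entries $0$ by zero $m\times m$ matrices; thus $\mathrm{diag}[D_1,\dots,D_k]\cdot s$ is the permutation matrix $s$ with the $1$ in the $j$-th block row replaced by $D_j$. Conjugation: $h^x=x^{-1}hx$, $D^{x_j}=x_j^{-1}Dx_j$. *)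

theory Defs
  imports "Jordan_Normal_Form.Matrix"
begin

definition GL :: "nat \<Rightarrow> 'a::field mat set" where
  "GL n = {A \<in> carrier_mat n n. invertible_mat A}"

definition minv :: "'a::field mat \<Rightarrow> 'a mat" where
  "minv A = (SOME B. B \<in> carrier_mat (dim_row A) (dim_row A) \<and> inverts_mat A B \<and> inverts_mat B A)"

definition mconj :: "'a::field mat \<Rightarrow> 'a mat \<Rightarrow> 'a mat" where
  "mconj h x = minv x * h * x"

definition subgroup_GL :: "nat \<Rightarrow> 'a::field mat set \<Rightarrow> bool" where
  "subgroup_GL n S \<longleftrightarrow> S \<subseteq> GL n \<and> 1\<^sub>m n \<in> S \<and>
     (\<forall>A\<in>S. \<forall>B\<in>S. A * B \<in> S) \<and> (\<forall>A\<in>S. minv A \<in> S)"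

definition perm_mat :: "nat \<Rightarrow> (nat \<Rightarrow> nat) \<Rightarrow> 'a::field mat" where
  "perm_mat k \<sigma> = mat k k (\<lambda>(i,j). if j = \<sigma> i then 1 else 0)"

definition perm_mats :: "nat \<Rightarrow> 'a::field mat set" where
  "perm_mats k = {perm_mat k \<sigma> | \<sigma>. \<sigma> permutes {0..<k}}"

text \<open>diag[D_0,...,D_{k-1}] * s for m x m blocks D_i and a k x k matrix s:
  the (i,j) block is s_{ij} D_i.\<close>
definition blockmono :: "nat \<Rightarrow> nat \<Rightarrow> (nat \<Rightarrow> 'a::field mat) \<Rightarrow> 'a mat \<Rightarrow> 'a mat" where
  "blockmono m k D s = mat (m*k) (m*k)
     (\<lambda>(r,c). s $$ (r div m, c div m) * D (r div m) $$ (r mod m, c mod m))"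

definition wr :: "nat \<Rightarrow> nat \<Rightarrow> 'a::field mat set \<Rightarrow> 'a mat set \<Rightarrow> 'a mat set" where
  "wr m k X Y = {blockmono m k D s | D s. s \<in> Y \<and> (\<forall>i<k. D i \<in> X)}"

definition Amat :: "nat \<Rightarrow> 'a::field mat" where
  "Amat k = mat k k (\<lambda>(i,j). if i \<le> j then (-1) ^ (j - i) else 0)"

definition xmat :: "nat \<Rightarrow> nat \<Rightarrow> (nat \<Rightarrow> 'a::field mat) \<Rightarrow> 'a mat" where
  "xmat m k xs = mat (m*k) (m*k)
     (\<lambda>(r,c). Amat k $$ (r div m, c div m) * xs (r div m) $$ (r mod m, c mod m))"

end

theory Submission imports Defs "Jordan_Normal_Form.Determinant"
begin

lemma sum_split_blocks:
  "(\<Sum>t\<in>{0..<m*k}. f t) = (\<Sum>l<k. \<Sum>u<m. f (l*m+u))" for m k :: nat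
proof (induction k)
  case 0 then show ?case by simp
next
  case (Suc k)
  have "{0..<m*Suc k} = {0..<m*k} \<union> {m*k..<m*k+m}" by auto
  then have "(\<Sum>t\<in>{0..<m*Suc k}. f t) = (\<Sum>t\<in>{0..<m*k}. f t) + (\<Sum>t\<in>{m*k..<m*k+m}. f t)"
    by (simp add: sum.union_disjoint)
  also have "(\<Sum>t\<in>{m*k..<m*k+m}. f t) = (\<Sum>u<m. f (k*m+u))"
  proof -
    have "(\<Sum>t\<in>{m*k..<m*k+m}. f t) = (\<Sum>u\<in>{0..<m}. f (u + m*k))"
      using sum.shift_bounds_nat_ivl[of f 0 "m*k" m] by (simp add: add.commute)
    then show ?thesis by (simp add: lessThan_atLeast0 mult.commute add.commute)
  qed
  finally show ?case using Suc by simp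
qed

lemma block_prod_entry:
  fixes P Q :: "'a::semiring_0 mat"
  assumes "P \<in> carrier_mat (m*k) (m*k)" "Q \<in> carrier_mat (m*k) (m*k)"
    and "i < k" "j < k" "a < m" "b < m"
  shows "(P*Q)$$(i*m+a, j*m+b) = (\<Sum>l<k. \<Sum>u<m. P$$(i*m+a, l*m+u) * Q$$(l*m+u, j*m+b))"
proof -
  have r: "i*m+a < m*k"
  proof -
    have "i*m+a < i*m+m" using assms by simp
    also have "\<dots> = (i+1)*m" by simp
    also have "\<dots> \<le> k*m" using assms by (intro mult_right_mono) auto
    finally show ?thesis by (simp add: mult.commute)
  qed
  have c: "j*m+b < m*k"
  proof -
    have "j*m+b < j*m+m" using assms by simp
    also have "\<dots> = (j+1)*m" by simp
    also have "\<dots> \<le> k*m" using assms by (intro mult_right_mono) auto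
    finally show ?thesis by (simp add: mult.commute)
  qed
  have "(P*Q)$$(i*m+a, j*m+b) = (\<Sum>t\<in>{0..<m*k}. P$$(i*m+a,t) * Q$$(t, j*m+b))"
    using assms r c by (simp add: scalar_prod_def)
  also have "\<dots> = (\<Sum>l<k. \<Sum>u<m. P$$(i*m+a, l*m+u) * Q$$(l*m+u, j*m+b))" by (rule sum_split_blocks)
  finally show ?thesis .
qed

lemma blk_lt: "l < k \<Longrightarrow> u < (m::nat) \<Longrightarrow> l*m+u < m*k"
proof -
  assume "l < k" "u < m"
  have "l*m+u < l*m+m" using \<open>u<m\<close> by simp
  also have "\<dots> = (l+1)*m" by simp
  also have "\<dots> \<le> k*m" using \<open>l<k\<close> by (intro mult_right_mono) auto
  finally show ?thesis by (simp add: mult.commute)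
qed

lemma blk_div: "u < (m::nat) \<Longrightarrow> (l*m+u) div m = l" by simp
lemma blk_mod: "u < (m::nat) \<Longrightarrow> (l*m+u) mod m = u" by simp


lemma minv_props:
  fixes A :: "'a::field mat"
  assumes "A \<in> carrier_mat n n" "invertible_mat A"
  shows "minv A \<in> carrier_mat n n \<and> A * minv A = 1\<^sub>m n \<and> minv A * A = 1\<^sub>m n"
proof -
  from assms obtain B where B: "inverts_mat A B" "inverts_mat B A"
    unfolding invertible_mat_def by blast
  have AB: "A * B = 1\<^sub>m n" using B(1) assms(1) by (simp add: inverts_mat_def)
  have dc: "dim_col B = n" using arg_cong[OF AB, of dim_col] by simp
  have BA: "B * A = 1\<^sub>m (dim_row B)" using B(2) by (simp add: inverts_mat_def)
  have dr: "dim_row B = n" using arg_cong[OF BA, of dim_col] assms(1) by simp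
  have "B \<in> carrier_mat (dim_row A) (dim_row A) \<and> inverts_mat A B \<and> inverts_mat B A"
    using B dc dr assms(1) by auto
  then have "minv A \<in> carrier_mat (dim_row A) (dim_row A) \<and> inverts_mat A (minv A) \<and> inverts_mat (minv A) A"
    unfolding minv_def by (rule someI)
  then show ?thesis using assms(1) by (auto simp: inverts_mat_def)
qed

lemma GL_props:
  assumes "(A::'a::field mat) \<in> GL n"
  shows "A \<in> carrier_mat n n" "minv A \<in> carrier_mat n n" "A * minv A = 1\<^sub>m n" "minv A * A = 1\<^sub>m n"
  using assms minv_props[of A n] unfolding GL_def by auto

lemma GL_nonzero:
  assumes "(A::'a::field mat) \<in> GL n" "0 < n"
  shows "\<exists>a<n. \<exists>b<n. A $$ (a,b) \<noteq> 0"
proof (rule ccontr)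
  assume "\<not> ?thesis"
  then have z: "\<forall>a<n. \<forall>b<n. A $$ (a,b) = 0" by auto
  have "A = 0\<^sub>m n n" using z GL_props(1)[OF assms(1)] by (intro eq_matI) auto
  then have "0\<^sub>m n n * minv A = 1\<^sub>m n" using GL_props(3)[OF assms(1)] by simp
  moreover have "0\<^sub>m n n * minv A = 0\<^sub>m n n" using GL_props(2)[OF assms(1)] by simp
  ultimately have "(0\<^sub>m n n :: 'a mat) $$ (0,0) = 1\<^sub>m n $$ (0,0)" by simp
  then show False using assms(2) by simp
qed

lemma mconj_eq:
  assumes "(P::'a::field mat) \<in> GL n" "Q \<in> carrier_mat n n" "R \<in> carrier_mat n n"
    and "P * Q = R * P"
  shows "mconj R P = Q"
proof -
  note G = GL_props[OF assms(1)]
  have "mconj R P = minv P * (R * P)" unfolding mconj_def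
    using G assms by (simp add: assoc_mult_mat[of _ n n _ n _ n])
  also have "\<dots> = minv P * (P * Q)" using assms by simp
  also have "\<dots> = (minv P * P) * Q" using G assms(2) by (intro assoc_mult_mat[symmetric]) auto
  also have "\<dots> = Q" using G assms by simp
  finally show ?thesis .
qed

lemma perm_mat_idx: "i < k \<Longrightarrow> j < k \<Longrightarrow> perm_mat k \<sigma> $$ (i,j) = (if j = \<sigma> i then 1 else 0)"
  unfolding perm_mat_def by simp

lemma Amat_idx: "i < k \<Longrightarrow> j < k \<Longrightarrow> Amat k $$ (i,j) = (if i \<le> j then (-1)^(j-i) else 0)"
  unfolding Amat_def by simp

lemma blockmono_idx: "i < k \<Longrightarrow> j < k \<Longrightarrow> a < m \<Longrightarrow> b < m \<Longrightarrow>
  blockmono m k D s $$ (i*m+a, j*m+b) = s $$ (i,j) * D i $$ (a,b)"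
  unfolding blockmono_def by (simp add: blk_lt)

lemma xmat_idx: "i < k \<Longrightarrow> j < k \<Longrightarrow> a < m \<Longrightarrow> b < m \<Longrightarrow>
  xmat m k xs $$ (i*m+a, j*m+b) = Amat k $$ (i,j) * xs i $$ (a,b)"
  unfolding xmat_def by (simp add: blk_lt)

lemma blockmono_carrier: "blockmono m k D s \<in> carrier_mat (m*k) (m*k)"
  unfolding blockmono_def by simp
lemma xmat_carrier: "xmat m k xs \<in> carrier_mat (m*k) (m*k)"
  unfolding xmat_def by simp

lemma mult_entry_scaled:
  fixes P Q :: "'a::field mat"
  assumes "P \<in> carrier_mat m m" "Q \<in> carrier_mat m m" "a < m" "b < m"
  shows "(\<Sum>u<m. (c * P $$ (a,u)) * (d * Q $$ (u,b))) = c * d * (P * Q) $$ (a,b)"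
  using assms by (simp add: scalar_prod_def sum_distrib_left lessThan_atLeast0 algebra_simps)


lemma L1:
  fixes xs F :: "nat \<Rightarrow> 'a::field mat"
  assumes sp: "p permutes {0..<k}" and F: "\<forall>l<k. F l \<in> carrier_mat m m"
    and xi: "xs i \<in> carrier_mat m m" and ij: "i < k" "j < k" and ab: "a < m" "b < m"
  shows "(xmat m k xs * blockmono m k F (perm_mat k p)) $$ (i*m+a, j*m+b)
     = Amat k $$ (i, inv_into UNIV p j) * (xs i * F (inv_into UNIV p j)) $$ (a,b)"
proof -
  have tj: "inv_into UNIV p j < k" using permutes_in_image[OF permutes_inv[OF sp]] ij by auto
  have "(xmat m k xs * blockmono m k F (perm_mat k p)) $$ (i*m+a, j*m+b)
    = (\<Sum>l<k. \<Sum>u<m. xmat m k xs $$ (i*m+a, l*m+u) * blockmono m k F (perm_mat k p) $$ (l*m+u, j*m+b))"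
    using ij ab by (intro block_prod_entry xmat_carrier blockmono_carrier)
  also have "\<dots> = (\<Sum>l<k. if l = inv_into UNIV p j then Amat k $$ (i, l) * (xs i * F l) $$ (a,b) else 0)"
  proof (rule sum.cong[OF refl])
    fix l assume l: "l \<in> {..<k}"
    have "(\<Sum>u<m. xmat m k xs $$ (i*m+a, l*m+u) * blockmono m k F (perm_mat k p) $$ (l*m+u, j*m+b))
       = (\<Sum>u<m. (Amat k $$ (i,l) * xs i $$ (a,u)) * (perm_mat k p $$ (l,j) * F l $$ (u,b)))"
      using l ij ab by (intro sum.cong[OF refl]) (simp add: xmat_idx blockmono_idx)
    also have "\<dots> = Amat k $$ (i,l) * perm_mat k p $$ (l,j) * (xs i * F l) $$ (a,b)"
      using l F xi ab by (intro mult_entry_scaled) auto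
    also have "\<dots> = (if l = inv_into UNIV p j then Amat k $$ (i, l) * (xs i * F l) $$ (a,b) else 0)"
      using l ij permutes_inv_eq[OF sp, of j l] by (auto simp: perm_mat_idx)
    finally show "(\<Sum>u<m. xmat m k xs $$ (i*m+a, l*m+u) * blockmono m k F (perm_mat k p) $$ (l*m+u, j*m+b)) = (if l = inv_into UNIV p j then Amat k $$ (i, l) * (xs i * F l) $$ (a,b) else 0)" .
  qed
  also have "\<dots> = Amat k $$ (i, inv_into UNIV p j) * (xs i * F (inv_into UNIV p j)) $$ (a,b)"
    using tj by (simp add: sum.delta')
  finally show ?thesis .
qed

lemma L2:
  fixes xs D :: "nat \<Rightarrow> 'a::field mat"
  assumes sp: "\<sigma> permutes {0..<k}" and xs: "\<forall>l<k. xs l \<in> carrier_mat m m"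
    and Di: "D i \<in> carrier_mat m m" and ij: "i < k" "j < k" and ab: "a < m" "b < m"
  shows "(blockmono m k D (perm_mat k \<sigma>) * xmat m k xs) $$ (i*m+a, j*m+b)
     = Amat k $$ (\<sigma> i, j) * (D i * xs (\<sigma> i)) $$ (a,b)"
proof -
  have si: "\<sigma> i < k" using permutes_in_image[OF sp] ij by auto
  have "(blockmono m k D (perm_mat k \<sigma>) * xmat m k xs) $$ (i*m+a, j*m+b)
    = (\<Sum>l<k. \<Sum>u<m. blockmono m k D (perm_mat k \<sigma>) $$ (i*m+a, l*m+u) * xmat m k xs $$ (l*m+u, j*m+b))"
    using ij ab by (intro block_prod_entry xmat_carrier blockmono_carrier)
  also have "\<dots> = (\<Sum>l<k. if l = \<sigma> i then Amat k $$ (l, j) * (D i * xs l) $$ (a,b) else 0)"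
  proof (rule sum.cong[OF refl])
    fix l assume l: "l \<in> {..<k}"
    have "(\<Sum>u<m. blockmono m k D (perm_mat k \<sigma>) $$ (i*m+a, l*m+u) * xmat m k xs $$ (l*m+u, j*m+b))
       = (\<Sum>u<m. (perm_mat k \<sigma> $$ (i,l) * D i $$ (a,u)) * (Amat k $$ (l,j) * xs l $$ (u,b)))"
      using l ij ab by (intro sum.cong[OF refl]) (simp add: xmat_idx blockmono_idx)
    also have "\<dots> = perm_mat k \<sigma> $$ (i,l) * Amat k $$ (l,j) * (D i * xs l) $$ (a,b)"
      using l xs Di ab by (intro mult_entry_scaled) auto
    also have "\<dots> = (if l = \<sigma> i then Amat k $$ (l, j) * (D i * xs l) $$ (a,b) else 0)"
      using l ij by (auto simp: perm_mat_idx)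
    finally show "(\<Sum>u<m. blockmono m k D (perm_mat k \<sigma>) $$ (i*m+a, l*m+u) * xmat m k xs $$ (l*m+u, j*m+b)) = (if l = \<sigma> i then Amat k $$ (l, j) * (D i * xs l) $$ (a,b) else 0)" .
  qed
  also have "\<dots> = Amat k $$ (\<sigma> i, j) * (D i * xs (\<sigma> i)) $$ (a,b)"
    using si by (simp add: sum.delta')
  finally show ?thesis .
qed


lemma coeff_sum:
  assumes "i < k" "j < k"
  shows "(\<Sum>l<k. Amat k $$ (i,l) * (if j = l \<or> j = l+1 then 1 else 0)) = (if i = j then 1 else (0::'a::field))"
proof -
  have "(\<Sum>l<k. Amat k $$ (i,l) * (if j = l \<or> j = l+1 then 1 else 0))
     = (\<Sum>l<k. (if l = j then Amat k $$ (i,l) else 0) + (if l = j - 1 \<and> 0 < j then Amat k $$ (i,l) else (0::'a)))"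
    by (intro sum.cong[OF refl]) auto
  also have "\<dots> = Amat k $$ (i,j) + (if 0 < j then Amat k $$ (i,j-1) else 0)"
    using assms by (simp add: sum.distrib sum.delta' sum.If_cases)
  also have "\<dots> = (if i = j then 1 else 0)"
  proof (cases "i < j")
    case True
    then have "j - i = Suc (j - 1 - i)" by simp
    then show ?thesis using True assms by (simp add: Amat_idx)
  next
    case False
    then show ?thesis using assms by (auto simp: Amat_idx)
  qed
  finally show ?thesis .
qed

lemma xmat_inv:
  fixes xs :: "nat \<Rightarrow> 'a::field mat"
  assumes xs: "\<forall>i<k. xs i \<in> GL m"
  shows "minv (xmat m k xs) \<in> carrier_mat (m*k) (m*k) \<and> xmat m k xs * minv (xmat m k xs) = 1\<^sub>m (m*k)"
proof -
  define Y :: "'a mat" where "Y = mat (m*k) (m*k) (\<lambda>(r,c). if c div m = r div m \<or> c div m = r div m + 1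
      then minv (xs (c div m)) $$ (r mod m, c mod m) else 0)"
  have Yc: "Y \<in> carrier_mat (m*k) (m*k)" unfolding Y_def by simp
  have Yidx: "Y $$ (l*m+u, j*m+b) = (if j = l \<or> j = l+1 then 1 else 0) * minv (xs j) $$ (u,b)"
    if "l < k" "j < k" "u < m" "b < m" for l j u b
    using that unfolding Y_def by (simp add: blk_lt)
  have XY: "xmat m k xs * Y = 1\<^sub>m (m*k)"
  proof (rule eq_matI)
    fix r c assume rc: "r < dim_row (1\<^sub>m (m*k) :: 'a mat)" "c < dim_col (1\<^sub>m (m*k) :: 'a mat)"
    then have r: "r < m*k" and c: "c < m*k" by auto
    then have m0: "0 < m" by (cases m) auto
    define i a j b where "i = r div m" "a = r mod m" "j = c div m" "b = c mod m"
    have ri: "r = i*m+a" "c = j*m+b" unfolding i_a_j_b_def by simp_all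
    have ik: "i < k" "j < k" using r c unfolding i_a_j_b_def
      by (simp_all add: less_mult_imp_div_less mult.commute)
    have ab: "a < m" "b < m" using m0 unfolding i_a_j_b_def by simp_all
    note Gi = GL_props[OF xs[rule_format, OF ik(1)]]
    note Gj = GL_props[OF xs[rule_format, OF ik(2)]]
    have "(xmat m k xs * Y) $$ (i*m+a, j*m+b)
      = (\<Sum>l<k. \<Sum>u<m. xmat m k xs $$ (i*m+a, l*m+u) * Y $$ (l*m+u, j*m+b))"
      using ik ab by (intro block_prod_entry xmat_carrier Yc)
    also have "\<dots> = (\<Sum>l<k. Amat k $$ (i,l) * (if j = l \<or> j = l+1 then 1 else 0) * (xs i * minv (xs j)) $$ (a,b))"
    proof (rule sum.cong[OF refl])
      fix l assume l: "l \<in> {..<k}"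
      have "(\<Sum>u<m. xmat m k xs $$ (i*m+a, l*m+u) * Y $$ (l*m+u, j*m+b))
        = (\<Sum>u<m. (Amat k $$ (i,l) * xs i $$ (a,u)) * ((if j = l \<or> j = l+1 then 1 else 0) * minv (xs j) $$ (u,b)))"
        using l ik ab by (intro sum.cong[OF refl]) (simp add: xmat_idx Yidx)
      also have "\<dots> = Amat k $$ (i,l) * (if j = l \<or> j = l+1 then 1 else 0) * (xs i * minv (xs j)) $$ (a,b)"
        using Gi Gj ab by (intro mult_entry_scaled) auto
      finally show "(\<Sum>u<m. xmat m k xs $$ (i*m+a, l*m+u) * Y $$ (l*m+u, j*m+b)) = Amat k $$ (i,l) * (if j = l \<or> j = l+1 then 1 else 0) * (xs i * minv (xs j)) $$ (a,b)" .
    qed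
    also have "\<dots> = (\<Sum>l<k. Amat k $$ (i,l) * (if j = l \<or> j = l+1 then 1 else 0)) * (xs i * minv (xs j)) $$ (a,b)"
      by (simp add: sum_distrib_right)
    also have "\<dots> = (if i = j then 1 else 0) * (xs i * minv (xs j)) $$ (a,b)"
      by (simp only: coeff_sum[OF ik])
    also have "\<dots> = 1\<^sub>m (m*k) $$ (r, c)"
    proof (cases "i = j")
      case True
      then show ?thesis using Gi ab r c ri by auto
    next
      case False
      then have "r \<noteq> c" using ri ab by (metis i_a_j_b_def(1) i_a_j_b_def(3))
      then show ?thesis using False r c by simp
    qed
    finally show "(xmat m k xs * Y) $$ (r, c) = 1\<^sub>m (m*k) $$ (r, c)" using ri by simp
  qed (auto simp: Y_def xmat_def)
  have YX: "Y * xmat m k xs = 1\<^sub>m (m*k)"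
    by (rule mat_mult_left_right_inverse[OF xmat_carrier Yc XY])
  have "invertible_mat (xmat m k xs)" unfolding invertible_mat_def inverts_mat_def
    using XY YX xmat_carrier[of m k xs] Yc by (auto simp: square_mat.simps)
  then show ?thesis using minv_props[OF xmat_carrier] by blast
qed

lemma perm_lt: fixes i k :: nat assumes "f permutes {0..<k}" "i < k" shows "f i < k"
proof -
  have "i \<in> {0..<k}" using assms(2) by simp
  then have "f i \<in> {0..<k}" using permutes_in_image[OF assms(1)] by blast
  then show ?thesis by simp
qed

lemma counting:
  fixes i k :: nat
  assumes s: "\<sigma> permutes {0..<k}" and p: "p permutes {0..<k}"
    and iff: "\<forall>i<k. \<forall>j<k. (i \<le> inv_into UNIV p j \<longleftrightarrow> \<sigma> i \<le> j)"
    and i: "i < k"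
  shows "\<sigma> i = i"
proof -
  have si: "\<sigma> i < k" using perm_lt[OF s i] .
  have "{\<sigma> i..<k} = p ` {i..<k}"
  proof
    show "{\<sigma> i..<k} \<subseteq> p ` {i..<k}"
    proof
      fix j assume j: "j \<in> {\<sigma> i..<k}"
      have tj: "inv_into UNIV p j < k" using perm_lt[OF permutes_inv[OF p]] j by simp
      have "i \<le> inv_into UNIV p j" using iff[rule_format, of i j] i j by simp
      moreover have "p (inv_into UNIV p j) = j" by (rule permutes_inverses(1)[OF p])
      ultimately show "j \<in> p ` {i..<k}" using tj by (metis atLeastLessThan_iff imageI)
    qed
  next
    show "p ` {i..<k} \<subseteq> {\<sigma> i..<k}"
    proof
      fix j assume "j \<in> p ` {i..<k}"
      then obtain l where l: "l \<in> {i..<k}" "j = p l" by auto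
      have jk: "j < k" using perm_lt[OF p] l by simp
      have "inv_into UNIV p j = l" unfolding l(2) by (rule permutes_inverses(2)[OF p])
      then have "\<sigma> i \<le> j" using iff[rule_format, of i j] i jk l(1) by simp
      then show "j \<in> {\<sigma> i..<k}" using jk by auto
    qed
  qed
  moreover have "card (p ` {i..<k}) = card {i..<k}"
    by (rule card_image[OF inj_on_subset[OF permutes_inj[OF p]]]) simp
  ultimately have "card {\<sigma> i..<k} = card {i..<k}" by simp
  then show ?thesis using si i by simp
qed


theorem mainTheorem15:
  fixes X Y H :: "'a::{field,finite} mat set"
    and m k :: nat and xs D :: "nat \<Rightarrow> 'a mat" and s h :: "'a mat"
  assumes "0 < m" and "0 < k"
    and "subgroup_GL m X"
    and "subgroup_GL k Y" and "Y \<subseteq> perm_mats k"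
    and "subgroup_GL (m*k) H" and "H \<subseteq> wr m k X Y"
    and "\<forall>i<k. xs i \<in> X"
    and "\<forall>i<k. D i \<in> X" and "s \<in> Y"
    and "h = blockmono m k D s" and "h \<in> H"
    and "mconj h (xmat m k xs) \<in> H"
  shows "s = 1\<^sub>m k \<and>
    (\<forall>j. j + 1 < k \<longrightarrow> mconj (D j) (xs j) = mconj (D (j+1)) (xs (j+1)))"
proof -
  note m0 = assms(1)
  have XGL: "X \<subseteq> GL m" and Xmul: "\<And>A B. A \<in> X \<Longrightarrow> B \<in> X \<Longrightarrow> A * B \<in> X"
    using assms(3) unfolding subgroup_GL_def by auto
  have xsX: "\<And>i. i < k \<Longrightarrow> xs i \<in> X" and DX: "\<And>i. i < k \<Longrightarrow> D i \<in> X"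
    using assms(8,9) by auto
  have xsGL: "\<forall>i<k. xs i \<in> GL m" using xsX XGL by auto
  have xsC: "\<forall>l<k. xs l \<in> carrier_mat m m" using xsGL GL_props(1) by blast
  have DC: "\<And>i. i < k \<Longrightarrow> D i \<in> carrier_mat m m" using DX XGL GL_props(1) by blast
  obtain \<sigma> where s\<sigma>: "\<sigma> permutes {0..<k}" and sdef: "s = perm_mat k \<sigma>"
    using assms(5,10) unfolding perm_mats_def by auto
  define x where "x = xmat m k xs"
  define g where "g = mconj h x"
  have "g \<in> wr m k X Y" using assms(7,13) unfolding g_def x_def by auto
  then obtain F s' where gdef: "g = blockmono m k F s'" and s'Y: "s' \<in> Y" and FX: "\<forall>i<k. F i \<in> X"
    unfolding wr_def by auto
  obtain p where sp: "p permutes {0..<k}" and s'def: "s' = perm_mat k p"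
    using assms(5) s'Y unfolding perm_mats_def by auto
  have FC: "\<forall>l<k. F l \<in> carrier_mat m m" using FX XGL GL_props(1) by blast
  have xi: "minv x \<in> carrier_mat (m*k) (m*k)" "x * minv x = 1\<^sub>m (m*k)"
    using xmat_inv[OF xsGL] unfolding x_def by auto
  have xC: "x \<in> carrier_mat (m*k) (m*k)" unfolding x_def by (rule xmat_carrier)
  have hC: "h \<in> carrier_mat (m*k) (m*k)" unfolding assms(11) by (rule blockmono_carrier)
  have xg: "x * g = h * x"
  proof -
    have "x * g = x * ((minv x * h) * x)" unfolding g_def mconj_def ..
    also have "\<dots> = (x * (minv x * h)) * x"
      using xi xC hC by (intro assoc_mult_mat[symmetric]) auto
    also have "x * (minv x * h) = (x * minv x) * h"
      using xi xC hC by (intro assoc_mult_mat[symmetric]) auto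
    also have "\<dots> = h" using xi hC by simp
    finally show ?thesis .
  qed
  define \<tau> where "\<tau> = inv_into UNIV p"
  have \<tau>lt: "\<And>j. j < k \<Longrightarrow> \<tau> j < k" unfolding \<tau>_def using perm_lt[OF permutes_inv[OF sp]] .
  have \<sigma>lt: "\<And>i. i < k \<Longrightarrow> \<sigma> i < k" using perm_lt[OF s\<sigma>] .
  have E: "Amat k $$ (i, \<tau> j) * (xs i * F (\<tau> j)) $$ (a,b) = Amat k $$ (\<sigma> i, j) * (D i * xs (\<sigma> i)) $$ (a,b)"
    if "i < k" "j < k" "a < m" "b < m" for i j a b
  proof -
    have "(x * g) $$ (i*m+a, j*m+b) = Amat k $$ (i, \<tau> j) * (xs i * F (\<tau> j)) $$ (a,b)"
      unfolding x_def gdef s'def \<tau>_def using that xsC FC sp by (intro L1) auto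
    moreover have "(h * x) $$ (i*m+a, j*m+b) = Amat k $$ (\<sigma> i, j) * (D i * xs (\<sigma> i)) $$ (a,b)"
      unfolding x_def assms(11) sdef using that xsC DC s\<sigma> by (intro L2) auto
    ultimately show ?thesis using xg by simp
  qed
  have Anz: "(Amat k :: 'a mat) $$ (i,j) \<noteq> 0 \<longleftrightarrow> i \<le> j" if "i < k" "j < k" for i j
    using that by (simp add: Amat_idx)
  have iff: "\<forall>i<k. \<forall>j<k. (i \<le> inv_into UNIV p j \<longleftrightarrow> \<sigma> i \<le> j)"
  proof (intro allI impI)
    fix i j assume ij: "i < k" "j < k"
    have P: "xs i * F (\<tau> j) \<in> GL m" using Xmul[OF xsX[OF ij(1)]] FX \<tau>lt[OF ij(2)] XGL by auto
    have Q: "D i * xs (\<sigma> i) \<in> GL m" using Xmul[OF DX[OF ij(1)] xsX[OF \<sigma>lt[OF ij(1)]]] XGL by auto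
    obtain a b where ab: "a < m" "b < m" "(xs i * F (\<tau> j)) $$ (a,b) \<noteq> 0" using GL_nonzero[OF P m0] by auto
    obtain a' b' where ab': "a' < m" "b' < m" "(D i * xs (\<sigma> i)) $$ (a',b') \<noteq> 0" using GL_nonzero[OF Q m0] by auto
    show "i \<le> inv_into UNIV p j \<longleftrightarrow> \<sigma> i \<le> j"
    proof
      assume "i \<le> inv_into UNIV p j"
      then have "(Amat k :: 'a mat) $$ (i, \<tau> j) \<noteq> 0" using Anz[OF ij(1) \<tau>lt[OF ij(2)]] unfolding \<tau>_def by simp
      then have "(Amat k :: 'a mat) $$ (\<sigma> i, j) * (D i * xs (\<sigma> i)) $$ (a,b) \<noteq> 0"
        using E[OF ij ab(1,2)] ab(3) by (metis mult_eq_0_iff)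
      then have "(Amat k :: 'a mat) $$ (\<sigma> i, j) \<noteq> 0" by auto
      then show "\<sigma> i \<le> j" using Anz[OF \<sigma>lt[OF ij(1)] ij(2)] by simp
    next
      assume "\<sigma> i \<le> j"
      then have "(Amat k :: 'a mat) $$ (\<sigma> i, j) \<noteq> 0" using Anz[OF \<sigma>lt[OF ij(1)] ij(2)] by simp
      then have "(Amat k :: 'a mat) $$ (i, \<tau> j) * (xs i * F (\<tau> j)) $$ (a',b') \<noteq> 0"
        using E[OF ij ab'(1,2)] ab'(3) by (metis mult_eq_0_iff)
      then have "(Amat k :: 'a mat) $$ (i, \<tau> j) \<noteq> 0" by auto
      then show "i \<le> inv_into UNIV p j" using Anz[OF ij(1) \<tau>lt[OF ij(2)]] unfolding \<tau>_def by simp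
    qed
  qed
  have \<sigma>id: "\<And>i. i < k \<Longrightarrow> \<sigma> i = i" using counting[OF s\<sigma> sp iff] .
  have \<tau>id: "\<tau> j = j" if j: "j < k" for j
  proof -
    have "j \<le> \<tau> j" using iff j \<sigma>id[OF j] unfolding \<tau>_def by auto
    moreover have "\<tau> j \<le> j" using iff[rule_format, OF \<tau>lt[OF j] j] \<sigma>id[OF \<tau>lt[OF j]] unfolding \<tau>_def by auto
    ultimately show ?thesis by simp
  qed
  have s1: "s = 1\<^sub>m k"
    unfolding sdef by (rule eq_matI) (auto simp: perm_mat_idx \<sigma>id perm_mat_def)
  have conj: "mconj (D j) (xs j) = mconj (D (j+1)) (xs (j+1))" if j: "j + 1 < k" for j
  proof -
    have jk: "j < k" using j by simp
    have e1: "xs j * F (j+1) = D j * xs j"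
    proof (rule eq_matI)
      fix a b assume ab: "a < dim_row (D j * xs j)" "b < dim_col (D j * xs j)"
      then have ab': "a < m" "b < m" using DC[OF jk] xsC jk by auto
      have "Amat k $$ (j, j+1) * (xs j * F (j+1)) $$ (a,b) = Amat k $$ (j, j+1) * (D j * xs j) $$ (a,b)"
        using E[OF jk j ab'] \<tau>id[OF j] \<sigma>id[OF jk] by simp
      moreover have "(Amat k :: 'a mat) $$ (j, j+1) = -1" using j by (simp add: Amat_idx)
      ultimately show "(xs j * F (j+1)) $$ (a,b) = (D j * xs j) $$ (a,b)" by simp
    qed (use DC[OF jk] xsC[rule_format, OF jk] FC[rule_format, OF j] in auto)
    have e2: "xs (j+1) * F (j+1) = D (j+1) * xs (j+1)"
    proof (rule eq_matI)
      fix a b assume ab: "a < dim_row (D (j+1) * xs (j+1))" "b < dim_col (D (j+1) * xs (j+1))"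
      then have ab': "a < m" "b < m" using DC[OF j] xsC j by auto
      have "Amat k $$ (j+1, j+1) * (xs (j+1) * F (j+1)) $$ (a,b) = Amat k $$ (j+1, j+1) * (D (j+1) * xs (j+1)) $$ (a,b)"
        using E[OF j j ab'] \<tau>id[OF j] \<sigma>id[OF j] by simp
      moreover have "(Amat k :: 'a mat) $$ (j+1, j+1) = 1" using j by (simp add: Amat_idx)
      ultimately show "(xs (j+1) * F (j+1)) $$ (a,b) = (D (j+1) * xs (j+1)) $$ (a,b)" by simp
    qed (use DC[OF j] xsC[rule_format, OF j] FC[rule_format, OF j] in auto)
    have "mconj (D j) (xs j) = F (j+1)"
      using xsGL jk FC j DC[OF jk] e1 by (intro mconj_eq) auto
    moreover have "mconj (D (j+1)) (xs (j+1)) = F (j+1)"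
      using xsGL FC j DC[OF j] e2 by (intro mconj_eq) auto
    ultimately show ?thesis by simp
  qed
  show ?thesis using s1 conj by auto
qed

end
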